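(* Run Algorithm 1 with sample size $pn=\frac{n}{e}$, and let $T$ be the set of all tentatively selected items, i.e. the set of items $j$ that arrive in some round $\ell\ge\lceil n/e\rceil$ and satisfy $j\in\mathcal{A}(U^{\le \ell})$ (regardless of whether they are accepted). Then $\mathbb{E}[v(T)]\ge\left(\frac{\alpha}{e}-\frac{\alpha}{n}\right)v(\mathrm{OPT})$.
   Context: Submodular secretary setting. Let $U$ be a finite ground set of $n$ items and $k\ge1$ an integer. Let $v\colon 2^U\to\mathbb{R}_{\ge0}$ be monotone ($S\subseteq T\Rightarrow v(S)\le v(T)$) and submodular ($v(S\cup\{x\})-v(S)\ge v(T\cup\{x\})-v(T)$ for all $S\subseteq T\subseteq U$, $x\in U\setminus T$). Let $\mathrm{OPT}\in\arg\max\{v(S): S\subseteq U, |S|\le k\}$. The items arrive one per round (rounds $1,\dots,n$) in a uniformly random order; for $\ell\in[n]$, $U^{\le \ell}$ denotes the set of items arriving in rounds $1,\dots,\ell$. $\mathcal{A}$ is an offline algorithm that, for every $L\subseteq U$, returns a set $\mathcal{A}(L)\subseteq L$ with $|\mathcal{A}(L)|\le k$ and $v(\mathcal{A}(L))\ge \alpha\max\{v(T):T\subseteq L,|T|\le k\}$, where $\alpha\in(0,1]$; the output $\mathcal{A}(L)$ depends only on the set $L$ (not on the arrival order). Algorithm 1 with sample size $pn$: it rejects the items arriving in rounds $1,\dots,\lceil pn\rceil-1$; in each round $\ell\ge\lceil pn\rceil$, with arriving item $j$, it computes $S^{(\ell)}=\mathcal{A}(U^{\le\ell})$; $j$ is called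 tentatively selected if $j\in S^{(\ell)}$; if $j$ is tentatively selected and fewer than $k$ items have been accepted so far, $j$ is accepted, otherwise rejected. *)

theory Defs
  imports Complex_Main "HOL-Combinatorics.Multiset_Permutations"
begin

text \<open>An arrival order of the ground set U is a list xs enumerating U without repetition;
  the item arriving in round l (1 \<le> l \<le> n) is xs ! (l - 1), and the set of items
  arriving in rounds 1..l is set (take l xs).\<close>

definition tentative_set :: "('a set \<Rightarrow> 'a set) \<Rightarrow> nat \<Rightarrow> 'a list \<Rightarrow> 'a set" where
  "tentative_set A t xs =
     {xs ! (l - 1) | l. 1 \<le> l \<and> t \<le> l \<and> l \<le> length xs \<and> xs ! (l - 1) \<in> A (set (take l xs))}"

definition exp_random_order :: "'a set \<Rightarrow> ('a list \<Rightarrow> real) \<Rightarrow> real" where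
  "exp_random_order U f =
     (\<Sum>xs\<in>permutations_of_set U. f xs) / real (card (permutations_of_set U))"

end

theory Submission
  imports Defs
begin


lemma perm_snoc_decomp:
  assumes "finite L" "L \<noteq> {}"
  shows "permutations_of_set L = (\<Union>j\<in>L. (\<lambda>ys. ys @ [j]) ` permutations_of_set (L - {j}))"
proof (rule set_eqI, rule iffI)
  fix xs assume xs: "xs \<in> permutations_of_set L"
  hence s: "set xs = L" "distinct xs" by (auto dest: permutations_of_setD)
  hence ne: "xs \<noteq> []" using assms by auto
  hence eq: "xs = butlast xs @ [last xs]" by simp
  have "distinct (butlast xs @ [last xs])" using s(2) eq by simp
  hence "last xs \<notin> set (butlast xs)" "distinct (butlast xs)" by auto
  moreover have "set xs = insert (last xs) (set (butlast xs))" using ne by (cases xs rule: rev_cases) auto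
  hence "set (butlast xs) \<union> {last xs} = L" using s by auto
  ultimately have "butlast xs \<in> permutations_of_set (L - {last xs})"
    by (intro permutations_of_setI) auto
  moreover have "last xs \<in> L" using s ne by auto
  ultimately show "xs \<in> (\<Union>j\<in>L. (\<lambda>ys. ys @ [j]) ` permutations_of_set (L - {j}))"
    using eq by blast
next
  fix xs assume "xs \<in> (\<Union>j\<in>L. (\<lambda>ys. ys @ [j]) ` permutations_of_set (L - {j}))"
  then obtain j ys where "j \<in> L" "ys \<in> permutations_of_set (L - {j})" "xs = ys @ [j]" by blast
  thus "xs \<in> permutations_of_set L" by (auto simp: permutations_of_set_def)
qed

lemma sum_perm_snoc:
  assumes "finite L" "L \<noteq> {}"
  shows "(\<Sum>xs\<in>permutations_of_set L. f xs) =
         (\<Sum>j\<in>L. \<Sum>ys\<in>permutations_of_set (L - {j}). f (ys @ [j]))"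
proof -
  have "(\<Sum>xs\<in>permutations_of_set L. f xs) =
        (\<Sum>j\<in>L. \<Sum>xs\<in>(\<lambda>ys. ys @ [j]) ` permutations_of_set (L - {j}). f xs)"
    unfolding perm_snoc_decomp[OF assms]
    by (rule sum.UNION_disjoint) (use assms in auto)
  also have "\<dots> = (\<Sum>j\<in>L. \<Sum>ys\<in>permutations_of_set (L - {j}). f (ys @ [j]))"
    by (rule sum.cong, simp, subst sum.reindex) (auto simp: inj_on_def)
  finally show ?thesis .
qed

lemma tentative_snoc:
  "tentative_set A t (ys @ [j]) = tentative_set A t ys \<union>
     (if t \<le> Suc (length ys) \<and> j \<in> A (insert j (set ys)) then {j} else {})"
proof -
  have "tentative_set A t (ys @ [j]) =
    {(ys@[j]) ! (l - 1) | l. 1 \<le> l \<and> t \<le> l \<and> l \<le> length ys \<and> (ys@[j]) ! (l - 1) \<in> A (set (take l (ys@[j])))}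
    \<union> {(ys@[j]) ! (l - 1) | l. 1 \<le> l \<and> t \<le> l \<and> l = Suc (length ys) \<and> (ys@[j]) ! (l - 1) \<in> A (set (take l (ys@[j])))}"
    unfolding tentative_set_def length_append list.size add_0 add_Suc_right le_Suc_eq
    by (rule set_eqI) (simp only: mem_Collect_eq Un_iff conj_disj_distribL conj_disj_distribR ex_disj_distrib add_0_right)
  also have "{(ys@[j]) ! (l - 1) | l. 1 \<le> l \<and> t \<le> l \<and> l \<le> length ys \<and> (ys@[j]) ! (l - 1) \<in> A (set (take l (ys@[j])))}
      = tentative_set A t ys"
    unfolding tentative_set_def
  proof (intro Collect_cong ex_cong1)
    fix x l
    show "(x = (ys@[j]) ! (l - 1) \<and> 1 \<le> l \<and> t \<le> l \<and> l \<le> length ys \<and> (ys@[j]) ! (l - 1) \<in> A (set (take l (ys@[j]))))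
       = (x = ys ! (l - 1) \<and> 1 \<le> l \<and> t \<le> l \<and> l \<le> length ys \<and> ys ! (l - 1) \<in> A (set (take l ys)))"
    proof (cases "1 \<le> l \<and> l \<le> length ys")
      case True
      hence "l - 1 < length ys" by arith
      hence "(ys@[j]) ! (l - 1) = ys ! (l - 1)" by (simp add: nth_append)
      moreover have "take l (ys@[j]) = take l ys" using True by simp
      ultimately show ?thesis by simp
    next
      case False
      thus ?thesis by blast
    qed
  qed
  also have "{(ys@[j]) ! (l - 1) | l. 1 \<le> l \<and> t \<le> l \<and> l = Suc (length ys) \<and> (ys@[j]) ! (l - 1) \<in> A (set (take l (ys@[j])))}
      = (if t \<le> Suc (length ys) \<and> j \<in> A (insert j (set ys)) then {j} else {})"
  proof -
    have eqv: "(\<exists>l. x = (ys@[j]) ! (l - 1) \<and> 1 \<le> l \<and> t \<le> l \<and> l = Suc (length ys) \<and> (ys@[j]) ! (l - 1) \<in> A (set (take l (ys@[j]))))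
       \<longleftrightarrow> x = j \<and> t \<le> Suc (length ys) \<and> j \<in> A (insert j (set ys))" for x
    proof
      assume "\<exists>l. x = (ys@[j]) ! (l - 1) \<and> 1 \<le> l \<and> t \<le> l \<and> l = Suc (length ys) \<and> (ys@[j]) ! (l - 1) \<in> A (set (take l (ys@[j])))"
      then obtain l where "x = (ys@[j]) ! (l - 1)" "t \<le> l" "l = Suc (length ys)" "(ys@[j]) ! (l - 1) \<in> A (set (take l (ys@[j])))" by blast
      thus "x = j \<and> t \<le> Suc (length ys) \<and> j \<in> A (insert j (set ys))" by simp
    next
      assume "x = j \<and> t \<le> Suc (length ys) \<and> j \<in> A (insert j (set ys))"
      thus "\<exists>l. x = (ys@[j]) ! (l - 1) \<and> 1 \<le> l \<and> t \<le> l \<and> l = Suc (length ys) \<and> (ys@[j]) ! (l - 1) \<in> A (set (take l (ys@[j])))"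
        by (intro exI[of _ "Suc (length ys)"]) simp
    qed
    show ?thesis by (rule set_eqI) (simp only: mem_Collect_eq eqv, auto)
  qed
  finally show ?thesis .
qed



lemma marg_sum:
  fixes v :: "'a set \<Rightarrow> real"
  assumes submod: "\<And>S T x. S \<subseteq> T \<Longrightarrow> T \<subseteq> U \<Longrightarrow> x \<in> U - T \<Longrightarrow>
                     v (insert x S) - v S \<ge> v (insert x T) - v T"
    and fin: "finite B" and "B \<subseteq> U" "W \<subseteq> U" "B \<inter> W = {}"
  shows "v (W \<union> B) - v W \<le> (\<Sum>j\<in>B. v (insert j W) - v W)"
  using fin assms(3-5)
proof (induction B rule: finite_induct)
  case empty thus ?case by simp
next
  case (insert b B)
  have "v (insert b (W \<union> B)) - v (W \<union> B) \<le> v (insert b W) - v W"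
    using insert by (intro submod) auto
  moreover have "v (W \<union> B) - v W \<le> (\<Sum>j\<in>B. v (insert j W) - v W)"
    using insert by auto
  moreover have "W \<union> insert b B = insert b (W \<union> B)" by auto
  ultimately show ?case using insert by simp
qed

lemma marg_sum2:
  fixes v :: "'a set \<Rightarrow> real"
  assumes submod: "\<And>S T x. S \<subseteq> T \<Longrightarrow> T \<subseteq> U \<Longrightarrow> x \<in> U - T \<Longrightarrow>
                     v (insert x S) - v S \<ge> v (insert x T) - v T"
    and fin: "finite B" and "B \<subseteq> U"
  shows "(\<Sum>j\<in>B. v B - v (B - {j})) \<le> v B - v {}"
  using fin assms(3)
proof (induction B rule: finite_induct)
  case empty thus ?case by simp
next
  case (insert b B)
  have "(\<Sum>j\<in>B. v (insert b B) - v (insert b B - {j})) \<le> (\<Sum>j\<in>B. v B - v (B - {j}))"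
  proof (rule sum_mono)
    fix j assume j: "j \<in> B"
    have "v (insert j (insert b B - {j})) - v (insert b B - {j}) \<le> v (insert j (B - {j})) - v (B - {j})"
      using insert j by (intro submod) auto
    moreover have "insert j (insert b B - {j}) = insert b B" "insert j (B - {j}) = B" using j by auto
    ultimately show "v (insert b B) - v (insert b B - {j}) \<le> v B - v (B - {j})" by simp
  qed
  moreover have "insert b B - {b} = B" using insert by auto
  ultimately show ?case using insert by simp
qed

lemma sum_remove_one:
  fixes v :: "'a set \<Rightarrow> real"
  assumes submod: "\<And>S T x. S \<subseteq> T \<Longrightarrow> T \<subseteq> U \<Longrightarrow> x \<in> U - T \<Longrightarrow>
                     v (insert x S) - v S \<ge> v (insert x T) - v T"
    and nonneg: "\<And>S. S \<subseteq> U \<Longrightarrow> v S \<ge> 0"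
    and fin: "finite L" and BL: "B \<subseteq> L" and LU: "L \<subseteq> U"
  shows "(real (card L) - 1) * v B \<le> (\<Sum>j\<in>L. v (B - {j}))"
proof -
  have finB: "finite B" using fin BL finite_subset by blast
  have "(\<Sum>j\<in>L. v (B - {j})) = (\<Sum>j\<in>L - B. v (B - {j})) + (\<Sum>j\<in>B. v (B - {j}))"
    by (rule sum.subset_diff[OF BL fin])
  also have "(\<Sum>j\<in>L - B. v (B - {j})) = (\<Sum>j\<in>L - B. v B)"
    by (rule sum.cong) auto
  also have "\<dots> = real (card L - card B) * v B"
    using card_Diff_subset[OF finB BL] by simp
  also have "real (card L - card B) = real (card L) - real (card B)"
    using card_mono[OF fin BL] by simp
  finally have e: "(\<Sum>j\<in>L. v (B - {j})) = (real (card L) - real (card B)) * v B + (\<Sum>j\<in>B. v (B - {j}))" .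
  have "(\<Sum>j\<in>B. v B - v (B - {j})) \<le> v B - v {}"
    using marg_sum2[OF submod finB] BL LU by blast
  hence "real (card B) * v B - (\<Sum>j\<in>B. v (B - {j})) \<le> v B - v {}"
    by (simp add: sum_subtractf)
  moreover have "v {} \<ge> 0" using nonneg by simp
  ultimately show ?thesis using e by (simp add: algebra_simps)
qed

fun pp :: "nat \<Rightarrow> nat \<Rightarrow> real" where
  "pp t 0 = 1"
| "pp t (Suc m) = (if Suc m < t then pp t m else pp t m * real m / real (Suc m))"

fun qq :: "nat \<Rightarrow> real \<Rightarrow> nat \<Rightarrow> real" where
  "qq t a 0 = 0"
| "qq t a (Suc m) = (if Suc m < t then real m * qq t a m else a * pp t m + real m * qq t a m) / real (Suc m)"

lemma pp_nonneg: "pp t m \<ge> 0"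
  by (induction m) auto

lemma qq_nonneg: "a \<ge> 0 \<Longrightarrow> qq t a m \<ge> 0"
  by (induction m) (auto simp: pp_nonneg)

lemma pp_lt: "m < t \<Longrightarrow> pp t m = 1"
  by (induction m) auto

lemma qq_lt: "m < t \<Longrightarrow> qq t a m = 0"
  by (induction m) auto

lemma pp_ge: "1 \<le> t \<Longrightarrow> t \<le> m \<Longrightarrow> pp t m = real (t - 1) / real m"
proof (induction m)
  case 0 thus ?case by simp
next
  case (Suc m)
  show ?case
  proof (cases "m < t")
    case True
    hence m: "m = t - 1" "Suc m = t" using Suc by linarith+
    have "pp t (Suc m) = pp t m * real m / real (Suc m)" by (subst pp.simps) (simp add: m(2))
    thus ?thesis using m pp_lt[OF True] by simp
  next
    case False
    hence "pp t m = real (t - 1) / real m" using Suc by simp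
    moreover have "m \<noteq> 0" using False Suc by linarith
    ultimately show ?thesis using False by simp
  qed
qed

lemma qq_ge: "2 \<le> t \<Longrightarrow> t \<le> m \<Longrightarrow> real m * qq t a m = a * real (t - 1) * (\<Sum>i\<in>{t-1..<m}. 1 / real i)"
proof (induction m)
  case 0 thus ?case by simp
next
  case (Suc m)
  have e: "real (Suc m) * qq t a (Suc m) = a * pp t m + real m * qq t a m"
    using Suc.prems by simp
  show ?case
  proof (cases "m < t")
    case True
    hence m: "m = t - 1" using Suc by linarith
    have "{t-1..<Suc m} = {t-1}" using m by auto
    moreover have "real (t - 1) \<noteq> 0" using Suc by simp
    ultimately show ?thesis using e pp_lt[OF True] qq_lt[OF True] m by simp
  next
    case False
    hence ih: "real m * qq t a m = a * real (t - 1) * (\<Sum>i\<in>{t-1..<m}. 1 / real i)" using Suc by simp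
    have p: "pp t m = real (t - 1) / real m" using False Suc by (intro pp_ge) auto
    have "(\<Sum>i\<in>{t-1..<Suc m}. 1 / real i) = (\<Sum>i\<in>{t-1..<m}. 1 / real i) + 1 / real m"
      using False by (subst sum.atLeastLessThan_Suc) auto
    thus ?thesis using e ih p by (simp add: algebra_simps)
  qed
qed

lemma harm_ln: "1 \<le> a \<Longrightarrow> a \<le> b \<Longrightarrow> ln (real b) - ln (real a) \<le> (\<Sum>i\<in>{a..<b}. 1 / real i)"
proof (induction b)
  case 0 thus ?case by simp
next
  case (Suc b)
  show ?case
  proof (cases "a \<le> b")
    case False
    hence "a = Suc b" using Suc by simp
    thus ?thesis by simp
  next
    case True
    have b: "real b \<ge> 1" using True Suc by simp
    have "ln (1 + 1 / real b) = ln ((real b + 1) / real b)"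
      using b by (simp add: field_simps)
    also have "\<dots> = ln (real b + 1) - ln (real b)"
      using b by (intro ln_divide_pos) auto
    finally have "ln (real (Suc b)) - ln (real b) = ln (1 + 1 / real b)" by (simp add: add.commute)
    also have "\<dots> \<le> 1 / real b" by (rule ln_add_one_self_le_self) simp
    finally have "ln (real (Suc b)) - ln (real b) \<le> 1 / real b" .
    moreover have "(\<Sum>i\<in>{a..<Suc b}. 1 / real i) = (\<Sum>i\<in>{a..<b}. 1 / real i) + 1 / real b"
      using True by simp
    ultimately show ?thesis using Suc.IH[OF Suc.prems(1) True] by linarith
  qed
qed



lemma tentative_Nil: "tentative_set A t [] = {}"
  unfolding tentative_set_def by auto

lemma main_ind:
  fixes U :: "'a set" and k :: nat and v :: "'a set \<Rightarrow> real"
    and A :: "'a set \<Rightarrow> 'a set" and \<alpha> :: real and OPT :: "'a set"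
  assumes finU: "finite U"
    and v_nonneg: "\<And>S. S \<subseteq> U \<Longrightarrow> v S \<ge> 0"
    and v_submod: "\<And>S T x. S \<subseteq> T \<Longrightarrow> T \<subseteq> U \<Longrightarrow> x \<in> U - T \<Longrightarrow>
                     v (insert x S) - v S \<ge> v (insert x T) - v T"
    and v_mono: "\<And>S T. S \<subseteq> T \<Longrightarrow> T \<subseteq> U \<Longrightarrow> v S \<le> v T"
    and OPT_feas: "OPT \<subseteq> U" "card OPT \<le> k"
    and alpha: "0 < \<alpha>"
    and A_sub: "\<And>L. L \<subseteq> U \<Longrightarrow> A L \<subseteq> L"
    and A_approx: "\<And>L S. L \<subseteq> U \<Longrightarrow> S \<subseteq> L \<Longrightarrow> card S \<le> k \<Longrightarrow> \<alpha> * v S \<le> v (A L)"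
  shows "\<forall>L W. L \<subseteq> U \<longrightarrow> card L = m \<longrightarrow> W \<subseteq> U \<longrightarrow> W \<inter> L = {} \<longrightarrow>
     fact m * (pp t m * v W + qq t \<alpha> m * v (OPT \<inter> L))
       \<le> (\<Sum>xs\<in>permutations_of_set L. v (W \<union> tentative_set A t xs))"
proof (induction m)
  case 0
  show ?case
  proof (intro allI impI)
    fix L W :: "'a set" assume "L \<subseteq> U" "card L = 0" "W \<subseteq> U" "W \<inter> L = {}"
    hence "L = {}" using finU finite_subset by fastforce
    thus "fact 0 * (pp t 0 * v W + qq t \<alpha> 0 * v (OPT \<inter> L))
       \<le> (\<Sum>xs\<in>permutations_of_set L. v (W \<union> tentative_set A t xs))"
      by (simp add: tentative_Nil)
  qed
next
  case (Suc m)
  show ?case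
  proof (intro allI impI)
    fix L W :: "'a set" assume LU: "L \<subseteq> U" and cL: "card L = Suc m" and WU: "W \<subseteq> U" and WL: "W \<inter> L = {}"
    have finL: "finite L" using finU LU finite_subset by blast
    have neL: "L \<noteq> {}" using cL by auto
    define B where "B = OPT \<inter> L"
    have BL: "B \<subseteq> L" unfolding B_def by auto
    have cB: "card B \<le> k" unfolding B_def using OPT_feas finU
      by (meson card_mono finite_subset inf_le1 order_trans)
    define X where "X = (\<lambda>j. if t \<le> Suc m \<and> j \<in> A L then {j} else ({}::'a set))"
    have XL: "X j \<subseteq> L" if "j \<in> L" for j using that unfolding X_def by auto
    have eq1: "(\<Sum>xs\<in>permutations_of_set L. v (W \<union> tentative_set A t xs))
       = (\<Sum>j\<in>L. \<Sum>ys\<in>permutations_of_set (L - {j}). v ((W \<union> X j) \<union> tentative_set A t ys))"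
    proof -
      have "(\<Sum>xs\<in>permutations_of_set L. v (W \<union> tentative_set A t xs))
         = (\<Sum>j\<in>L. \<Sum>ys\<in>permutations_of_set (L - {j}). v (W \<union> tentative_set A t (ys @ [j])))"
        by (rule sum_perm_snoc[OF finL neL])
      also have "\<dots> = (\<Sum>j\<in>L. \<Sum>ys\<in>permutations_of_set (L - {j}). v ((W \<union> X j) \<union> tentative_set A t ys))"
      proof (intro sum.cong refl)
        fix j ys assume j: "j \<in> L" and ys: "ys \<in> permutations_of_set (L - {j})"
        have "length ys = m" using length_finite_permutations_of_set[OF ys] cL finL j by simp
        moreover have "insert j (set ys) = L" using permutations_of_setD(1)[OF ys] j by auto
        ultimately have "tentative_set A t (ys @ [j]) = tentative_set A t ys \<union> X j"
          unfolding tentative_snoc X_def by simp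
        thus "v (W \<union> tentative_set A t (ys @ [j])) = v ((W \<union> X j) \<union> tentative_set A t ys)"
          by (simp add: Un_ac)
      qed
      finally show ?thesis .
    qed
    have ih: "fact m * (pp t m * v (W \<union> X j) + qq t \<alpha> m * v (B - {j}))
       \<le> (\<Sum>ys\<in>permutations_of_set (L - {j}). v ((W \<union> X j) \<union> tentative_set A t ys))"
      if j: "j \<in> L" for j
    proof -
      have "L - {j} \<subseteq> U" "card (L - {j}) = m" "W \<union> X j \<subseteq> U" "(W \<union> X j) \<inter> (L - {j}) = {}"
        using LU cL j WU WL XL[OF j] finL unfolding X_def by (auto split: if_splits)
      moreover have "OPT \<inter> (L - {j}) = B - {j}" unfolding B_def by auto
      ultimately show ?thesis using Suc.IH[rule_format, of "L - {j}" "W \<union> X j"] by simp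
    qed
    have S1: "real m * v B \<le> (\<Sum>j\<in>L. v (B - {j}))"
      using sum_remove_one[OF v_submod v_nonneg finL BL LU] cL by simp
    have vB: "\<alpha> * v B \<le> v (A L)" using A_approx[OF LU BL cB] .
    have key: "real (Suc m) * (pp t (Suc m) * v W + qq t \<alpha> (Suc m) * v B)
       \<le> pp t m * (\<Sum>j\<in>L. v (W \<union> X j)) + qq t \<alpha> m * (\<Sum>j\<in>L. v (B - {j}))"
    proof (cases "Suc m < t")
      case True
      hence "(\<Sum>j\<in>L. v (W \<union> X j)) = real (Suc m) * v W" unfolding X_def using cL by simp
      moreover have "qq t \<alpha> m * (real m * v B) \<le> qq t \<alpha> m * (\<Sum>j\<in>L. v (B - {j}))"
        using S1 qq_nonneg[of \<alpha>] alpha by (intro mult_left_mono) auto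
      moreover have q: "real (Suc m) * qq t \<alpha> (Suc m) = real m * qq t \<alpha> m" using True by simp
      moreover have p: "pp t (Suc m) = pp t m" using True by simp
      ultimately have "pp t m * (real (Suc m) * v W) + (real (Suc m) * qq t \<alpha> (Suc m)) * v B
          \<le> pp t m * (\<Sum>j\<in>L. v (W \<union> X j)) + qq t \<alpha> m * (\<Sum>j\<in>L. v (B - {j}))"
        by (simp only: q) (simp add: algebra_simps)
      thus ?thesis unfolding p by (simp add: algebra_simps del: qq.simps)
    next
      case False
      have AL: "A L \<subseteq> L" using A_sub[OF LU] .
      have finA: "finite (A L)" using AL finL finite_subset by blast
      have "(\<Sum>j\<in>L. v (W \<union> X j)) = (\<Sum>j\<in>L. v W + (if j \<in> A L then v (insert j W) - v W else 0))"
        using False unfolding X_def by (intro sum.cong) auto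
      also have "\<dots> = real (Suc m) * v W + (\<Sum>j\<in>L \<inter> A L. v (insert j W) - v W)"
        by (simp add: sum.distrib sum.inter_restrict[OF finL] cL)
      also have "L \<inter> A L = A L" using AL by auto
      finally have e: "(\<Sum>j\<in>L. v (W \<union> X j)) = real (Suc m) * v W + (\<Sum>j\<in>A L. v (insert j W) - v W)" .
      have "v (W \<union> A L) - v W \<le> (\<Sum>j\<in>A L. v (insert j W) - v W)"
        by (rule marg_sum[OF v_submod finA]) (use AL LU WU WL in auto)
      moreover have "v (A L) \<le> v (W \<union> A L)" using v_mono AL LU WU by auto
      ultimately have T: "real m * v W + \<alpha> * v B \<le> (\<Sum>j\<in>L. v (W \<union> X j))"
        using e vB by (simp add: distrib_right; linarith)
      have "pp t m * (real m * v W + \<alpha> * v B) \<le> pp t m * (\<Sum>j\<in>L. v (W \<union> X j))"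
        using T pp_nonneg by (intro mult_left_mono) auto
      moreover have "qq t \<alpha> m * (real m * v B) \<le> qq t \<alpha> m * (\<Sum>j\<in>L. v (B - {j}))"
        using S1 qq_nonneg[of \<alpha>] alpha by (intro mult_left_mono) auto
      moreover have q: "real (Suc m) * qq t \<alpha> (Suc m) = \<alpha> * pp t m + real m * qq t \<alpha> m" using False by simp
      moreover have p: "real (Suc m) * pp t (Suc m) = pp t m * real m" using False by simp
      ultimately have "(real (Suc m) * pp t (Suc m)) * v W + (real (Suc m) * qq t \<alpha> (Suc m)) * v B
          \<le> pp t m * (\<Sum>j\<in>L. v (W \<union> X j)) + qq t \<alpha> m * (\<Sum>j\<in>L. v (B - {j}))"
        by (simp only: q p) (simp add: algebra_simps)
      thus ?thesis by (simp add: algebra_simps del: qq.simps pp.simps)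
    qed
    have "fact (Suc m) * (pp t (Suc m) * v W + qq t \<alpha> (Suc m) * v (OPT \<inter> L))
       = fact m * (real (Suc m) * (pp t (Suc m) * v W + qq t \<alpha> (Suc m) * v B))"
      unfolding B_def by (simp add: algebra_simps)
    also have "\<dots> \<le> fact m * (pp t m * (\<Sum>j\<in>L. v (W \<union> X j)) + qq t \<alpha> m * (\<Sum>j\<in>L. v (B - {j})))"
      using key by (intro mult_left_mono) auto
    also have "\<dots> = (\<Sum>j\<in>L. fact m * (pp t m * v (W \<union> X j) + qq t \<alpha> m * v (B - {j})))"
      by (simp add: sum_distrib_left sum.distrib algebra_simps)
    also have "\<dots> \<le> (\<Sum>j\<in>L. \<Sum>ys\<in>permutations_of_set (L - {j}). v ((W \<union> X j) \<union> tentative_set A t ys))"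
      using ih by (intro sum_mono) auto
    also have "\<dots> = (\<Sum>xs\<in>permutations_of_set L. v (W \<union> tentative_set A t xs))"
      using eq1 by simp
    finally show "fact (Suc m) * (pp t (Suc m) * v W + qq t \<alpha> (Suc m) * v (OPT \<inter> L))
       \<le> (\<Sum>xs\<in>permutations_of_set L. v (W \<union> tentative_set A t xs))" .
  qed
qed



theorem mainTheorem2:
  fixes U :: "'a set" and k :: nat and v :: "'a set \<Rightarrow> real"
    and A :: "'a set \<Rightarrow> 'a set" and \<alpha> :: real and OPT :: "'a set"
  assumes finU: "finite U"
    and k_pos: "k \<ge> 1"
    and v_nonneg: "\<And>S. S \<subseteq> U \<Longrightarrow> v S \<ge> 0"
    and v_mono: "\<And>S T. S \<subseteq> T \<Longrightarrow> T \<subseteq> U \<Longrightarrow> v S \<le> v T"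
    and v_submod: "\<And>S T x. S \<subseteq> T \<Longrightarrow> T \<subseteq> U \<Longrightarrow> x \<in> U - T \<Longrightarrow>
                     v (insert x S) - v S \<ge> v (insert x T) - v T"
    and OPT_feas: "OPT \<subseteq> U" "card OPT \<le> k"
    and OPT_max: "\<And>S. S \<subseteq> U \<Longrightarrow> card S \<le> k \<Longrightarrow> v S \<le> v OPT"
    and alpha: "0 < \<alpha>" "\<alpha> \<le> 1"
    and A_sub: "\<And>L. L \<subseteq> U \<Longrightarrow> A L \<subseteq> L"
    and A_card: "\<And>L. L \<subseteq> U \<Longrightarrow> card (A L) \<le> k"
    and A_approx: "\<And>L S. L \<subseteq> U \<Longrightarrow> S \<subseteq> L \<Longrightarrow> card S \<le> k \<Longrightarrow> \<alpha> * v S \<le> v (A L)"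
  shows "exp_random_order U
           (\<lambda>xs. v (tentative_set A (nat \<lceil>real (card U) / exp 1\<rceil>) xs))
         \<ge> (\<alpha> / exp 1 - \<alpha> / real (card U)) * v OPT"
proof -
  define n where "n = card U"
  define t where "t = nat \<lceil>real n / exp 1\<rceil>"
  define E where "E = exp_random_order U (\<lambda>xs. v (tentative_set A t xs))"
  have H: "fact n * (pp t n * v {} + qq t \<alpha> n * v (OPT \<inter> U))
       \<le> (\<Sum>xs\<in>permutations_of_set U. v ({} \<union> tentative_set A t xs))"
    using main_ind[OF finU v_nonneg v_submod v_mono OPT_feas alpha(1) A_sub A_approx, of n t]
    unfolding n_def by blast
  have OU: "OPT \<inter> U = OPT" using OPT_feas by auto
  have fpos: "(fact n :: real) > 0" by simp
  have Eeq: "E = (\<Sum>xs\<in>permutations_of_set U. v (tentative_set A t xs)) / fact n"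
    unfolding E_def exp_random_order_def n_def using finU by simp
  have E1: "E \<ge> pp t n * v {} + qq t \<alpha> n * v OPT"
    using H OU fpos unfolding Eeq by (simp add: field_simps)
  have v0: "v {} \<ge> 0" using v_nonneg by simp
  have vO: "v OPT \<ge> 0" using v_nonneg OPT_feas by simp
  have E0: "E \<ge> qq t \<alpha> n * v OPT"
    using E1 v0 pp_nonneg[of t n] by (smt (verit) mult_nonneg_nonneg)
  have Enn: "E \<ge> 0" using E0 vO qq_nonneg[of \<alpha> t n] alpha by (smt (verit) mult_nonneg_nonneg)
  have e1: "exp (1::real) \<ge> 2" using exp_ge_add_one_self[of 1] by simp
  have goal: "E \<ge> (\<alpha> / exp 1 - \<alpha> / real n) * v OPT"
  proof (cases "n = 0")
    case True
    hence "U = {}" using finU n_def by simp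
    hence "OPT = {}" using OPT_feas by auto
    moreover have "pp t n = 1" using True by simp
    ultimately have "E \<ge> v {}" using E1 True by simp
    moreover have "\<alpha> / exp 1 \<le> 1" using alpha e1 by (simp add: divide_le_eq)
    moreover have "\<alpha> / exp 1 * v {} \<le> v {}" using \<open>\<alpha> / exp 1 \<le> 1\<close> v0 alpha
      by (intro mult_left_le_one_le) auto
    ultimately show ?thesis using True \<open>OPT = {}\<close> by simp
  next
    case False
    hence npos: "real n > 0" by simp
    have x0: "real n / exp 1 \<ge> 0" by simp
    have rt0: "real t = of_int \<lceil>real n / exp 1\<rceil>" unfolding t_def using x0 by simp
    have tge: "real t \<ge> real n / exp 1" using rt0 ceiling_correct[of "real n / exp 1"] by linarith
    have tlt: "real t - 1 < real n / exp 1" using rt0 ceiling_correct[of "real n / exp 1"] by linarith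
    show ?thesis
    proof (cases "t \<le> 1")
      case True
      hence "real n / exp 1 \<le> 1" using tge by linarith
      hence "real n \<le> exp 1" by (simp add: divide_le_eq)
      hence "1 / exp 1 \<le> 1 / real n" using npos by (simp add: frac_le)
      hence "\<alpha> / exp 1 - \<alpha> / real n \<le> 0" using alpha
        by (metis diff_le_0_iff_le divide_inverse inverse_eq_divide mult_left_mono less_imp_le mult_1_right)
      hence "(\<alpha> / exp 1 - \<alpha> / real n) * v OPT \<le> 0" using vO by (simp add: mult_nonpos_nonneg)
      thus ?thesis using Enn by linarith
    next
      case False
      hence t2: "2 \<le> t" by simp
      have "real n / exp 1 \<le> real n" using e1 npos by (simp add: divide_le_eq)
      hence "real t < real n + 1" using tlt by linarith
      hence "t < n + 1" by linarith
      hence tn: "t \<le> n" by simp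
      have q: "real n * qq t \<alpha> n = \<alpha> * real (t - 1) * (\<Sum>i\<in>{t-1..<n}. 1 / real i)"
        by (rule qq_ge[OF t2 tn])
      have t1pos: "real (t - 1) > 0" using t2 by simp
      have rt: "real (t - 1) = real t - 1" using t2 by simp
      have "ln (real n) - ln (real (t - 1)) \<le> (\<Sum>i\<in>{t-1..<n}. 1 / real i)"
        using t2 tn by (intro harm_ln) auto
      moreover have "ln (real n) - ln (real (t - 1)) \<ge> 1"
      proof -
        have "real (t - 1) * exp 1 \<le> real n" using tlt rt by (simp add: less_divide_eq)
        hence "exp 1 \<le> real n / real (t - 1)" using t1pos by (simp add: le_divide_eq mult.commute)
        moreover have pos: "real n / real (t - 1) > 0" using npos t1pos by simp
        ultimately have "ln (exp 1) \<le> ln (real n / real (t - 1))"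
          by (simp only: ln_le_cancel_iff[OF exp_gt_zero pos])
        thus ?thesis using t1pos npos by (simp add: ln_divide_pos)
      qed
      ultimately have hs: "(\<Sum>i\<in>{t-1..<n}. 1 / real i) \<ge> 1" by linarith
      have "\<alpha> * real (t - 1) \<le> \<alpha> * real (t - 1) * (\<Sum>i\<in>{t-1..<n}. 1 / real i)"
        using mult_left_mono[OF hs, of "\<alpha> * real (t - 1)"] alpha t1pos by simp
      hence "\<alpha> * real (t - 1) \<le> real n * qq t \<alpha> n" using q by simp
      hence qb: "\<alpha> * real (t - 1) / real n \<le> qq t \<alpha> n" using npos by (simp add: divide_le_eq mult.commute)
      have "\<alpha> / exp 1 - \<alpha> / real n = \<alpha> * (real n / exp 1 - 1) / real n"
        using npos by (simp add: field_simps)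
      also have "\<dots> \<le> \<alpha> * real (t - 1) / real n"
        using tge rt alpha npos by (intro divide_right_mono mult_left_mono) auto
      finally have "\<alpha> / exp 1 - \<alpha> / real n \<le> qq t \<alpha> n" using qb by linarith
      hence "(\<alpha> / exp 1 - \<alpha> / real n) * v OPT \<le> qq t \<alpha> n * v OPT" using vO by (rule mult_right_mono)
      thus ?thesis using E0 by linarith
    qed
  qed
  thus ?thesis unfolding E_def t_def n_def .
qed

end
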